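(* Let $r\ge5$, let $A$ be an independent set in $G(n,r,1)$, let $A_0=\{v_1,\dots,v_k\}$, $I_0$, $A_1$, $P$ be as in the context, and fix $x\in[n]\setminus(I_0\cup P)$. For $i=1,\dots,k$ let $B_i=\{v\in A_1: x\in v,\ v\cap v_i\ne\emptyset\}$, and for each $v\in B_i$ let $f(v)=v\setminus\{x,y,z\}$ where $y,z$ are two (arbitrarily chosen) distinct elements of $v\cap v_i$. Let $\omega=r^5\binom{n}{r-5}$. If $i\ne j$, $B_i\ne\emptyset$ and $|B_j|\ge\omega$, then $f(u_1)\cap f(u_2)\ne\emptyset$ for all $u_1,u_2\in B_i$.
   Context: $G(n,r,1)$ is the graph on $[n]^{(r)}$ in which two $r$-subsets are adjacent iff they intersect in exactly one element; members of an independent set pairwise intersect in $0$ or at least $2$ elements, so each $v\in B_i$ has $|v\cap v_i|\ge2$. $A_0=\{v_1,\dots,v_k\}\subset A$ is a subfamily of pairwise disjoint sets of maximum cardinality, $I_0=v_1\cup\dots\cup v_k$, $A_1$ is the set of $v\in A\setminus A_0$ intersecting exactly one $v_i$. Distinct elements $x,y$ are joint if every $v\in A_1$ satisfies $|v\cap\{x,y\}|\ne1$; $P$ is the set of elements of $[n]\setminus I_0$ joint with some other element of $[n]\setminus I_0$. *)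

theory Defs
  imports Main "HOL-Library.Disjoint_Sets"
begin

definition r_subsets :: "nat \<Rightarrow> nat \<Rightarrow> nat set set" where
  "r_subsets n r = {X. X \<subseteq> {1..n} \<and> card X = r}"

definition indep_Gnr1 :: "nat \<Rightarrow> nat \<Rightarrow> nat set set \<Rightarrow> bool" where
  "indep_Gnr1 n r A \<longleftrightarrow> A \<subseteq> r_subsets n r \<and>
     (\<forall>u\<in>A. \<forall>w\<in>A. u \<noteq> w \<longrightarrow> card (u \<inter> w) \<noteq> 1)"

definition max_disjoint_subfamily :: "nat set set \<Rightarrow> nat \<Rightarrow> (nat \<Rightarrow> nat set) \<Rightarrow> bool" where
  "max_disjoint_subfamily A k v \<longleftrightarrow>
     inj_on v {1..k} \<and> v ` {1..k} \<subseteq> A \<and> disjoint_family_on v {1..k} \<and>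
     (\<forall>S. S \<subseteq> A \<longrightarrow> disjoint S \<longrightarrow> card S \<le> k)"

definition I0 :: "nat \<Rightarrow> (nat \<Rightarrow> nat set) \<Rightarrow> nat set" where
  "I0 k v = (\<Union>i\<in>{1..k}. v i)"

definition A1 :: "nat set set \<Rightarrow> nat \<Rightarrow> (nat \<Rightarrow> nat set) \<Rightarrow> nat set set" where
  "A1 A k v = {w \<in> A - v ` {1..k}. card {i\<in>{1..k}. w \<inter> v i \<noteq> {}} = 1}"

definition joint :: "nat set set \<Rightarrow> nat \<Rightarrow> (nat \<Rightarrow> nat set) \<Rightarrow> nat \<Rightarrow> nat \<Rightarrow> bool" where
  "joint A k v x y \<longleftrightarrow> x \<noteq> y \<and> (\<forall>w\<in>A1 A k v. card (w \<inter> {x, y}) \<noteq> 1)"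

definition Pset :: "nat \<Rightarrow> nat set set \<Rightarrow> nat \<Rightarrow> (nat \<Rightarrow> nat set) \<Rightarrow> nat set" where
  "Pset n A k v = {x \<in> {1..n} - I0 k v. \<exists>y \<in> {1..n} - I0 k v. y \<noteq> x \<and> joint A k v x y}"

definition Bset :: "nat set set \<Rightarrow> nat \<Rightarrow> (nat \<Rightarrow> nat set) \<Rightarrow> nat \<Rightarrow> nat \<Rightarrow> nat set set" where
  "Bset A k v x i = {w \<in> A1 A k v. x \<in> w \<and> w \<inter> v i \<noteq> {}}"

end

theory Submission
  imports Defs
begin

lemma count_sup:
  fixes S :: "nat set"
  shows "card {W \<in> r_subsets n r. S \<subseteq> W \<and> card S = 5} \<le> (n choose (r - 5))"
proof (cases "card S = 5")
  case False
  then show ?thesis by simp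
next
  case True
  then have fS: "finite S" by (metis card.infinite zero_neq_numeral)
  let ?F = "{W \<in> r_subsets n r. S \<subseteq> W \<and> card S = 5}"
  let ?T = "{B. B \<subseteq> {1..n} \<and> card B = r - 5}"
  have inj: "inj_on (\<lambda>W. W - S) ?F"
    by (rule inj_onI) blast
  have img: "(\<lambda>W. W - S) ` ?F \<subseteq> ?T"
  proof
    fix B assume "B \<in> (\<lambda>W. W - S) ` ?F"
    then obtain W where W: "W \<in> ?F" "B = W - S" by blast
    then have "W \<subseteq> {1..n}" "card W = r" "S \<subseteq> W" by (auto simp: r_subsets_def)
    moreover have "finite W" using \<open>W \<subseteq> {1..n}\<close> finite_subset by blast
    ultimately show "B \<in> ?T" using W True by (auto simp: card_Diff_subset fS)
  qed
  have fT: "finite ?T" by (rule finite_subset[of _ "Pow {1..n}"]) auto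
  have "card ?F \<le> card ?T" using card_inj_on_le[OF inj img fT] .
  also have "card ?T = n choose (r - 5)" using n_subsets[of "{1..n}" "r - 5"] by simp
  finally show ?thesis .
qed

lemma A1_unique:
  assumes "w \<in> A1 A k v" "l \<in> {1..k}" "m \<in> {1..k}" "w \<inter> v l \<noteq> {}" "w \<inter> v m \<noteq> {}"
  shows "l = m"
proof -
  have "card {i\<in>{1..k}. w \<inter> v i \<noteq> {}} = 1" using assms(1) by (simp add: A1_def)
  then obtain t where "{i\<in>{1..k}. w \<inter> v i \<noteq> {}} = {t}" by (rule card_1_singletonE)
  moreover have "l \<in> {i\<in>{1..k}. w \<inter> v i \<noteq> {}}" "m \<in> {i\<in>{1..k}. w \<inter> v i \<noteq> {}}"
    using assms by auto
  ultimately show ?thesis by auto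
qed

theorem lemma7:
  fixes n r k x i j :: nat and A :: "nat set set" and v :: "nat \<Rightarrow> nat set"
    and f :: "nat set \<Rightarrow> nat set"
  assumes "r \<ge> 5"
    and "indep_Gnr1 n r A"
    and "max_disjoint_subfamily A k v"
    and "x \<in> {1..n} - (I0 k v \<union> Pset n A k v)"
    and "i \<in> {1..k}" and "j \<in> {1..k}" and "i \<noteq> j"
    and "\<forall>w \<in> Bset A k v x i. \<exists>y z. y \<noteq> z \<and> y \<in> w \<inter> v i \<and> z \<in> w \<inter> v i
            \<and> f w = w - {x, y, z}"
    and "Bset A k v x i \<noteq> {}"
    and "card (Bset A k v x j) \<ge> r ^ 5 * (n choose (r - 5))"
  shows "\<forall>u1 \<in> Bset A k v x i. \<forall>u2 \<in> Bset A k v x i. f u1 \<inter> f u2 \<noteq> {}"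
proof (intro ballI notI)
  fix u1 u2 assume u1: "u1 \<in> Bset A k v x i" and u2: "u2 \<in> Bset A k v x i"
    and disj: "f u1 \<inter> f u2 = {}"
  have Asub: "A \<subseteq> r_subsets n r" and indep: "\<And>u w. u \<in> A \<Longrightarrow> w \<in> A \<Longrightarrow> u \<noteq> w \<Longrightarrow> card (u \<inter> w) \<noteq> 1"
    using assms(2) by (auto simp: indep_Gnr1_def)
  have memA: "\<And>w. w \<in> A \<Longrightarrow> w \<subseteq> {1..n} \<and> card w = r \<and> finite w"
    using Asub by (auto simp: r_subsets_def intro: finite_subset)
  have vA: "\<And>l. l \<in> {1..k} \<Longrightarrow> v l \<in> A" using assms(3) by (auto simp: max_disjoint_subfamily_def)
  have xnot: "\<And>l. l \<in> {1..k} \<Longrightarrow> x \<notin> v l" using assms(4) by (auto simp: I0_def)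
  have key: "\<exists>a. a \<in> w \<and> a \<in> f u \<and> a \<notin> v j" if u: "u \<in> Bset A k v x i" and w: "w \<in> Bset A k v x j" for u w
  proof -
    have uA1: "u \<in> A1 A k v" "x \<in> u" "u \<inter> v i \<noteq> {}" using u by (auto simp: Bset_def)
    have wA1: "w \<in> A1 A k v" "x \<in> w" "w \<inter> v j \<noteq> {}" using w by (auto simp: Bset_def)
    have wi: "w \<inter> v i = {}" using A1_unique[OF wA1(1) assms(5) assms(6)] wA1(3) assms(7) by blast
    have uj: "u \<inter> v j = {}" using A1_unique[OF uA1(1) assms(5) assms(6)] uA1(3) assms(7) by blast
    have uA: "u \<in> A" and wA: "w \<in> A" using uA1(1) wA1(1) by (auto simp: A1_def)
    have "u \<noteq> w" using wi uA1(3) by blast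
    then have c: "card (u \<inter> w) \<noteq> 1" using indep uA wA by blast
    have fin: "finite (u \<inter> w)" using memA uA by blast
    have "u \<inter> w \<noteq> {x}" using c by auto
    moreover have "x \<in> u \<inter> w" using uA1 wA1 by blast
    ultimately obtain a where a: "a \<in> u \<inter> w" "a \<noteq> x" by blast
    obtain y z where yz: "y \<in> v i" "z \<in> v i" "f u = u - {x, y, z}" using assms(8) u by blast
    have "a \<notin> v i" using a wi by blast
    then have "a \<in> f u" using a yz by auto
    moreover have "a \<notin> v j" using a uj by blast
    ultimately show ?thesis using a by blast
  qed
  have fin_vj: "finite (v j)" using memA vA assms(6) by blast
  have fin_u1: "finite u1" and fin_u2: "finite u2"
    using u1 u2 memA by (auto simp: Bset_def A1_def)
  have cu1: "card u1 = r" and cu2: "card u2 = r" and cvj: "card (v j) = r"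
    using u1 u2 memA vA assms(6) by (auto simp: Bset_def A1_def)
  have fsub1: "f u1 \<subseteq> u1" and fsub2: "f u2 \<subseteq> u2" and xf1: "x \<notin> f u1" and xf2: "x \<notin> f u2"
    using assms(8) u1 u2 by blast+
  define S where "S = (\<lambda>q::nat \<times> nat \<times> nat \<times> nat. {x, fst q, fst (snd q), fst (snd (snd q)), snd (snd (snd q))})"
  define F where "F = (\<lambda>q. {W \<in> r_subsets n r. S q \<subseteq> W \<and> card (S q) = 5})"
  define I where "I = u1 \<times> u2 \<times> v j \<times> v j"
  have sub: "Bset A k v x j \<subseteq> (\<Union>q\<in>I. F q)"
  proof
    fix w assume w: "w \<in> Bset A k v x j"
    obtain a where a: "a \<in> w" "a \<in> f u1" "a \<notin> v j" using key[OF u1 w] by blast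
    obtain b where b: "b \<in> w" "b \<in> f u2" "b \<notin> v j" using key[OF u2 w] by blast
    have wA1: "w \<in> A1 A k v" "x \<in> w" "w \<inter> v j \<noteq> {}" using w by (auto simp: Bset_def)
    have wA: "w \<in> A" and wnv: "w \<noteq> v j" using wA1(1) assms(6) by (auto simp: A1_def)
    have c1: "card (w \<inter> v j) \<noteq> 1" using indep[OF wA vA[OF assms(6)] wnv] .
    obtain c where c: "c \<in> w \<inter> v j" using wA1(3) by blast
    have "w \<inter> v j \<noteq> {c}" using c1 by auto
    then obtain d where d: "d \<in> w \<inter> v j" "d \<noteq> c" using c by blast
    have xv: "x \<notin> v j" using xnot assms(6) by blast
    have ab: "a \<noteq> b" using a b disj by blast
    have dist: "x \<noteq> a" "x \<noteq> b" "x \<noteq> c" "x \<noteq> d" "a \<noteq> c" "a \<noteq> d" "b \<noteq> c" "b \<noteq> d"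
      using a b c d xv xf1 xf2 by auto
    have "card {x, a, b, c, d} = 5"
      using dist ab d(2) by simp
    moreover have "{x, a, b, c, d} \<subseteq> w" using a b c d wA1 by blast
    moreover have "w \<in> r_subsets n r" using wA Asub by blast
    moreover have "(a, b, c, d) \<in> I" using a b c d fsub1 fsub2 by (auto simp: I_def)
    ultimately show "w \<in> (\<Union>q\<in>I. F q)" by (force simp: F_def S_def)
  qed
  have finI: "finite I" using fin_u1 fin_u2 fin_vj by (simp add: I_def)
  have finU: "finite (\<Union>q\<in>I. F q)"
    by (rule finite_subset[of _ "Pow {1..n}"]) (auto simp: F_def r_subsets_def)
  have "card (Bset A k v x j) \<le> card (\<Union>q\<in>I. F q)" using card_mono[OF finU sub] .
  also have "\<dots> \<le> (\<Sum>q\<in>I. card (F q))" using card_UN_le[OF finI] .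
  also have "\<dots> \<le> card I * (n choose (r - 5))"
    using sum_bounded_above[of I "\<lambda>q. card (F q)" "n choose (r - 5)"] count_sup
    by (simp add: F_def)
  also have "card I = r ^ 4" using cu1 cu2 cvj by (simp add: I_def card_cartesian_product power4_eq_xxxx)
  finally have le: "r ^ 5 * (n choose (r - 5)) \<le> r ^ 4 * (n choose (r - 5))" using assms(10) by linarith
  have "r \<le> n"
  proof -
    have "u1 \<subseteq> {1..n}" using u1 memA by (auto simp: Bset_def A1_def)
    then have "card u1 \<le> n" using card_mono[of "{1..n}" u1] by simp
    then show ?thesis using cu1 by simp
  qed
  then have pos: "n choose (r - 5) > 0" by simp
  have "r ^ 4 < r ^ 5" using assms(1) by (simp add: power_strict_increasing)
  then have "r ^ 4 * (n choose (r - 5)) < r ^ 5 * (n choose (r - 5))" using pos by simp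
  then show False using le by simp
qed

end
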